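(* Let $k\ge3$ and let $G=(V,E)$ be a $k$-uniform hyperstar of size $d\ge2$ with $V=[n]$ and heart the vertex $1$, and let $\mathcal L$ be its Laplacian tensor. Suppose $(\lambda,\mathbf x)$ is an H-eigenpair of $\mathcal L$ with $\lambda\neq1$. Then: (i) If $i,j\ge2$ lie in a common edge, then $x_i=x_j$ when $k$ is odd and $|x_i|=|x_j|$ when $k$ is even. (ii) If $i,j\ge2$ and $x_i\neq0$, $x_j\neq0$, then $x_i=x_j$ when $k$ is odd and $|x_i|=|x_j|$ when $k$ is even.
   Context: A $k$-uniform hyperstar of size $d$ is a hypergraph whose vertex set is a disjoint union $V=V_0\cup V_1\cup\cdots\cup V_d$ with $|V_0|=1$, $|V_1|=\cdots=|V_d|=k-1$, and edge set $\{V_0\cup V_i: i\in[d]\}$; the vertex in $V_0$ is the heart. For a $k$-uniform hypergraph with $d_i$ the number of edges containing $i$, the Laplacian tensor $\mathcal L=\mathcal D-\mathcal A$ ($\mathcal D$ diagonal with entries $d_i$, $\mathcal A$ with entries $\frac1{(k-1)!}$ at index tuples forming an edge and $0$ otherwise) satisfies $(\mathcal L\mathbf x^{k-1})_i=d_ix_i^{k-1}-\sum_{e\ni i}\prod_{s\in e\setminus\{i\}}x_s$. An H-eigenpair $(\lambda,\mathbf x)$ consists of $\lambda\in\mathbb R$ and $\mathbf x\in\mathbb R^n\setminus\{0\}$ with $(\mathcal L\mathbf x^{k-1})_i=\lambda x_i^{k-1}$ for all $i$. *)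

theory Defs
  imports Complex_Main
begin

definition is_hyperstar :: "nat \<Rightarrow> nat \<Rightarrow> nat \<Rightarrow> nat \<Rightarrow> nat set set \<Rightarrow> bool" where
  "is_hyperstar k d n h E \<longleftrightarrow>
     (\<exists>P :: nat \<Rightarrow> nat set.
        (\<forall>i\<in>{1..d}. card (P i) = k - 1 \<and> finite (P i) \<and> h \<notin> P i) \<and>
        (\<forall>i\<in>{1..d}. \<forall>j\<in>{1..d}. i \<noteq> j \<longrightarrow> P i \<inter> P j = {}) \<and>
        {1..n} = insert h (\<Union>i\<in>{1..d}. P i) \<and>
        E = (\<lambda>i. insert h (P i)) ` {1..d})"

definition hdeg :: "nat set set \<Rightarrow> nat \<Rightarrow> nat" where
  "hdeg E i = card {e \<in> E. i \<in> e}"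

text \<open>(L x^{k-1})_i = d_i x_i^{k-1} - sum over edges e containing i of
  the product of x_s over s in e - {i}, for the Laplacian tensor L = D - A.\<close>
definition lap_apply :: "nat \<Rightarrow> nat set set \<Rightarrow> (nat \<Rightarrow> real) \<Rightarrow> nat \<Rightarrow> real" where
  "lap_apply k E x i = real (hdeg E i) * x i ^ (k - 1)
      - (\<Sum>e\<in>{e \<in> E. i \<in> e}. \<Prod>s\<in>e - {i}. x s)"

text \<open>H-eigenpair of the Laplacian tensor on vertex set {1..n}; x is a real
  vector indexed by {1..n} (values outside are irrelevant).\<close>
definition H_eigenpair :: "nat \<Rightarrow> nat \<Rightarrow> nat set set \<Rightarrow> real \<Rightarrow> (nat \<Rightarrow> real) \<Rightarrow> bool" where
  "H_eigenpair k n E lam x \<longleftrightarrow>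
     (\<exists>i\<in>{1..n}. x i \<noteq> 0) \<and>
     (\<forall>i\<in>{1..n}. lap_apply k E x i = lam * x i ^ (k - 1))"

end

theory Submission
  imports Defs
begin

lemma abs_pow_eq: "(a::real) ^ k = b ^ k \<Longrightarrow> 0 < k \<Longrightarrow> \<bar>a\<bar> = \<bar>b\<bar>"
  by (metis power_abs power_eq_imp_eq_base abs_ge_zero)

lemma odd_pow_eq: "(a::real) ^ k = b ^ k \<Longrightarrow> odd k \<Longrightarrow> a = b"
proof -
  assume h: "a ^ k = b ^ k" and o: "odd k"
  then have k: "0 < k" by (cases k) auto
  have "\<bar>a\<bar> = \<bar>b\<bar>" using abs_pow_eq[OF h k] .
  then have "a = b \<or> a = - b" by auto
  then show "a = b"
  proof
    assume "a = - b"
    then have "b ^ k = - (b ^ k)" using h o by simp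
    then have "b ^ k = 0" by simp
    then have "b = 0" by simp
    then show "a = b" using \<open>a = - b\<close> by simp
  qed
qed

theorem lemma5p1:
  fixes k d n :: nat and E :: "nat set set" and lam :: real and x :: "nat \<Rightarrow> real"
  assumes "k \<ge> 3" and "d \<ge> 2"
    and "is_hyperstar k d n 1 E"
    and "H_eigenpair k n E lam x"
    and "lam \<noteq> 1"
  shows "(\<forall>i\<in>{2..n}. \<forall>j\<in>{2..n}. (\<exists>e\<in>E. i \<in> e \<and> j \<in> e) \<longrightarrow>
            (odd k \<longrightarrow> x i = x j) \<and> (even k \<longrightarrow> \<bar>x i\<bar> = \<bar>x j\<bar>))
       \<and> (\<forall>i\<in>{2..n}. \<forall>j\<in>{2..n}. x i \<noteq> 0 \<longrightarrow> x j \<noteq> 0 \<longrightarrow>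
            (odd k \<longrightarrow> x i = x j) \<and> (even k \<longrightarrow> \<bar>x i\<bar> = \<bar>x j\<bar>))"
proof -
  obtain P where P1: "\<forall>i\<in>{1..d}. card (P i) = k - 1 \<and> finite (P i) \<and> 1 \<notin> P i"
    and P2: "\<forall>i\<in>{1..d}. \<forall>j\<in>{1..d}. i \<noteq> j \<longrightarrow> P i \<inter> P j = {}"
    and P3: "{1..n} = insert 1 (\<Union>i\<in>{1..d}. P i)"
    and P4: "E = (\<lambda>i. insert 1 (P i)) ` {1..d}"
    using assms(3) unfolding is_hyperstar_def by blast
  have eig: "\<forall>i\<in>{1..n}. lap_apply k E x i = lam * x i ^ (k - 1)"
    using assms(4) unfolding H_eigenpair_def by blast
  have lm: "1 - lam \<noteq> 0" using assms(5) by simp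
  have inP: "\<exists>a\<in>{1..d}. i \<in> P a" if "i \<in> {2..n}" for i
  proof -
    have "i \<in> {1..n}" "i \<noteq> 1" using that by auto
    then show ?thesis using P3 by blast
  qed
  have edges: "{e \<in> E. i \<in> e} = {insert 1 (P a)}" if a: "a \<in> {1..d}" "i \<in> P a" for a i
  proof -
    have "i \<noteq> 1" using P1 a by auto
    have "b = a" if "b \<in> {1..d}" "i \<in> P b" for b
      using P2 a that by blast
    note ba = this
    show ?thesis
    proof (intro equalityI subsetI)
      fix e assume "e \<in> {e \<in> E. i \<in> e}"
      then have e: "e \<in> E" "i \<in> e" by auto
      then obtain b where b: "b \<in> {1..d}" "e = insert 1 (P b)" using P4 by blast
      then have "i \<in> P b" using e(2) \<open>i \<noteq> 1\<close> by simp
      then have "b = a" using ba b(1) by blast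
      then show "e \<in> {insert 1 (P a)}" using b by simp
    next
      fix e assume "e \<in> {insert 1 (P a)}"
      then have "e = insert 1 (P a)" by simp
      moreover have "insert 1 (P a) \<in> E" using P4 a(1) by blast
      ultimately show "e \<in> {e \<in> E. i \<in> e}" using a(2) by simp
    qed
  qed
  have eqA: "(1 - lam) * x i ^ (k - 1) = x 1 * (\<Prod>s\<in>P a - {i}. x s)"
    if a: "a \<in> {1..d}" "i \<in> P a" for a i
  proof -
    have in1n: "i \<in> {1..n}" using P3 a by blast
    have fin: "finite (P a)" "1 \<notin> P a" using P1 a by auto
    have hd: "hdeg E i = 1" unfolding hdeg_def using edges[OF a] by simp
    have setEq: "insert 1 (P a) - {i} = insert 1 (P a - {i})" using fin a by auto
    have "lap_apply k E x i = x i ^ (k - 1) - x 1 * (\<Prod>s\<in>P a - {i}. x s)"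
    proof -
      have pr: "(\<Prod>s\<in>insert 1 (P a) - {i}. x s) = x 1 * (\<Prod>s\<in>P a - {i}. x s)"
        using fin by (simp only: setEq prod.insert) simp
      show ?thesis unfolding lap_apply_def hd edges[OF a] using pr by simp
    qed
    then show ?thesis using eig in1n by (simp add: algebra_simps)
  qed
  have eqB: "(1 - lam) * x i ^ k = x 1 * (\<Prod>s\<in>P a. x s)"
    if a: "a \<in> {1..d}" "i \<in> P a" for a i
  proof -
    have fin: "finite (P a)" using P1 a by auto
    have "x i ^ k = x i * x i ^ (k - 1)" using assms(1)
      by (simp add: power_Suc[symmetric] del: power_Suc)
    then have "(1 - lam) * x i ^ k = x i * ((1 - lam) * x i ^ (k - 1))" by simp
    also have "\<dots> = x 1 * (x i * (\<Prod>s\<in>P a - {i}. x s))" using eqA[OF a] by simp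
    also have "\<dots> = x 1 * (\<Prod>s\<in>P a. x s)" using prod.remove[OF fin a(2), of x] by simp
    finally show ?thesis .
  qed
  have powk: "x i ^ k = x j ^ k" if a: "a \<in> {1..d}" "i \<in> P a" "j \<in> P a" for a i j
  proof -
    have "(1 - lam) * x i ^ k = (1 - lam) * x j ^ k" using eqB[OF a(1,2)] eqB[OF a(1,3)] by simp
    then show ?thesis using lm by simp
  qed
  have k0: "0 < k" using assms(1) by simp
  have same: "(odd k \<longrightarrow> x i = x j) \<and> (even k \<longrightarrow> \<bar>x i\<bar> = \<bar>x j\<bar>)"
    if a: "a \<in> {1..d}" "i \<in> P a" "j \<in> P a" for a i j
  proof -
    have h: "x i ^ k = x j ^ k" using powk[OF a] .
    show ?thesis using odd_pow_eq[OF h] abs_pow_eq[OF h k0] by simp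
  qed
  have part1: "\<forall>i\<in>{2..n}. \<forall>j\<in>{2..n}. (\<exists>e\<in>E. i \<in> e \<and> j \<in> e) \<longrightarrow>
            (odd k \<longrightarrow> x i = x j) \<and> (even k \<longrightarrow> \<bar>x i\<bar> = \<bar>x j\<bar>)"
  proof (intro ballI impI)
    fix i j assume ij: "i \<in> {2..n}" "j \<in> {2..n}" and "\<exists>e\<in>E. i \<in> e \<and> j \<in> e"
    then obtain a where a: "a \<in> {1..d}" "i \<in> insert 1 (P a)" "j \<in> insert 1 (P a)"
      using P4 by auto
    then have "i \<in> P a" "j \<in> P a" using ij by auto
    then show "(odd k \<longrightarrow> x i = x j) \<and> (even k \<longrightarrow> \<bar>x i\<bar> = \<bar>x j\<bar>)"
      using same a(1) by blast
  qed
  have card2: "card (P a - {i}) = k - 2" if a: "a \<in> {1..d}" "i \<in> P a" for a i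
    using P1 a by (simp add: card_Diff_singleton)
  have kk: "x i ^ (k - 1) = x i * x i ^ (k - 2)" for i
  proof -
    have "k - 1 = Suc (k - 2)" using assms(1) by simp
    then show ?thesis by simp
  qed
  have oddval: "x i = x 1 / (1 - lam)" if a: "a \<in> {1..d}" "i \<in> P a" and o: "odd k" and nz: "x i \<noteq> 0" for a i
  proof -
    have "(\<Prod>s\<in>P a - {i}. x s) = (\<Prod>s\<in>P a - {i}. x i)"
      using same[OF a(1) _ a(2)] o by (intro prod.cong) auto
    also have "\<dots> = x i ^ (k - 2)" using card2[OF a] by simp
    finally have "(1 - lam) * (x i * x i ^ (k - 2)) = x 1 * x i ^ (k - 2)"
      using eqA[OF a] kk by simp
    then have e1: "((1 - lam) * x i) * x i ^ (k - 2) = x 1 * x i ^ (k - 2)" by (simp only: mult.assoc)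
    have "x i ^ (k - 2) \<noteq> 0" using nz by simp
    then have "(1 - lam) * x i = x 1" using e1 mult_right_cancel by blast
    then show ?thesis using lm by (simp add: field_simps)
  qed
  have evval: "\<bar>x i\<bar> = \<bar>x 1\<bar> / \<bar>1 - lam\<bar>" if a: "a \<in> {1..d}" "i \<in> P a" and nz: "x i \<noteq> 0" for a i
  proof -
    have "(\<Prod>s\<in>P a - {i}. \<bar>x s\<bar>) = (\<Prod>s\<in>P a - {i}. \<bar>x i\<bar>)"
    proof (rule prod.cong)
      fix s assume "s \<in> P a - {i}"
      then have "x s ^ k = x i ^ k" using powk[OF a(1) _ a(2)] by blast
      then show "\<bar>x s\<bar> = \<bar>x i\<bar>" using abs_pow_eq k0 by blast
    qed simp
    also have "\<dots> = \<bar>x i\<bar> ^ (k - 2)" using card2[OF a] by simp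
    finally have pr: "\<bar>\<Prod>s\<in>P a - {i}. x s\<bar> = \<bar>x i\<bar> ^ (k - 2)" by (simp add: abs_prod)
    have "\<bar>(1 - lam) * (x i * x i ^ (k - 2))\<bar> = \<bar>x 1 * (\<Prod>s\<in>P a - {i}. x s)\<bar>"
      using eqA[OF a] kk by simp
    then have "\<bar>1 - lam\<bar> * \<bar>x i\<bar> * \<bar>x i\<bar> ^ (k - 2) = \<bar>x 1\<bar> * \<bar>x i\<bar> ^ (k - 2)"
      using pr by (simp add: abs_mult power_abs mult.assoc)
    moreover have "\<bar>x i\<bar> ^ (k - 2) \<noteq> 0" using nz by simp
    ultimately have "\<bar>1 - lam\<bar> * \<bar>x i\<bar> = \<bar>x 1\<bar>" using mult_right_cancel by blast
    then show ?thesis using lm by (simp add: field_simps)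
  qed
  have part2: "\<forall>i\<in>{2..n}. \<forall>j\<in>{2..n}. x i \<noteq> 0 \<longrightarrow> x j \<noteq> 0 \<longrightarrow>
            (odd k \<longrightarrow> x i = x j) \<and> (even k \<longrightarrow> \<bar>x i\<bar> = \<bar>x j\<bar>)"
  proof (intro ballI impI conjI)
    fix i j assume ij: "i \<in> {2..n}" "j \<in> {2..n}" and nz: "x i \<noteq> 0" "x j \<noteq> 0"
    obtain a where a: "a \<in> {1..d}" "i \<in> P a" using inP[OF ij(1)] by blast
    obtain b where b: "b \<in> {1..d}" "j \<in> P b" using inP[OF ij(2)] by blast
    show "x i = x j" if "odd k" using oddval[OF a that nz(1)] oddval[OF b that nz(2)] by simp
    show "\<bar>x i\<bar> = \<bar>x j\<bar>" if "even k" using evval[OF a nz(1)] evval[OF b nz(2)] by simp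
  qed
  show ?thesis using part1 part2 by blast
qed

end
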